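(* (a) If $\pi\in\mathfrak{S}_{2n+1}$ is a down-up permutation, then every inversion of $\pi$ is admissible, i.e. $\mathsf{adi}\,\pi=\mathsf{inv}\,\pi$. (b) For every $n\ge0$ and every $\pi\in\widetilde{\mathfrak{S}}_{2n+1,n}(213)$, $$\mathsf{adi}\,\pi+\mathsf{adi}\,\pi^r=2n^2+n,\qquad \mathsf{adi}\,\pi=2\cdot(3\text{-}12)\pi,\qquad \mathsf{adi}\,\pi^r=(31\text{-}2)\pi.$$
   Context: A permutation $\pi\in\mathfrak{S}_m$ is down-up if $\pi(1)>\pi(2)<\pi(3)>\pi(4)<\cdots$ (descents and ascents alternate, starting with a descent). $\pi^r=\pi(m)\cdots\pi(1)$ is the reverse. $\mathsf{inv}\,\pi=\#\{i<j:\pi(i)>\pi(j)\}$. Admissible inversions: set $\pi(m+1)=0$; an inversion pair $(\pi(i),\pi(j))$ ($1\le i<j\le m$, $\pi(i)>\pi(j)$) is admissible if $\pi(j)<\pi(j+1)$ or there is $l$ with $i<l<j$ and $\pi(l)<\pi(j)$; $\mathsf{adi}\,\pi$ counts them. $(3\text{-}12)\pi=\#\{(i,j):i<j<m,\ \pi(j)<\pi(j+1)<\pi(i)\}$; $(31\text{-}2)\pi=\#\{(i,j):i+1<j\le m,\ \pi(i+1)<\pi(j)<\pi(i)\}$. $\mathsf{des}\,\pi=\#\{i\in[m-1]:\pi(i)>\pi(i+1)\}$; $\mathsf{dd}\,\pi$ is the number of $i\in[m]$ with $\pi(i-1)>\pi(i)>\pi(i+1)$ under the boundary convention $\pi(0)=\pi(m+1)=0$.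 $\widetilde{\mathfrak{S}}_{m,k}(213)=\{\pi\in\mathfrak{S}_m:\pi\text{ avoids }213,\ \mathsf{dd}\,\pi=0,\ \mathsf{des}\,\pi=k\}$. *)

theory Defs
  imports Main
begin

text \<open>A permutation pi of [m] is represented as a list xs of length m with
  pi(i) = xs ! (i - 1) for 1 <= i <= m.  The value function pv extends pi by
  pi(0) = pi(m+1) = 0 (the boundary conventions of the paper).\<close>

definition is_perm :: "nat \<Rightarrow> nat list \<Rightarrow> bool" where
  "is_perm m xs \<longleftrightarrow> length xs = m \<and> distinct xs \<and> set xs = {1..m}"

definition pv :: "nat list \<Rightarrow> nat \<Rightarrow> nat" where
  "pv xs i = (if 1 \<le> i \<and> i \<le> length xs then xs ! (i - 1) else 0)"

definition down_up :: "nat list \<Rightarrow> bool" where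
  "down_up xs \<longleftrightarrow> (\<forall>i. 1 \<le> i \<and> i < length xs \<longrightarrow>
     (odd i \<longrightarrow> pv xs i > pv xs (i + 1)) \<and> (even i \<longrightarrow> pv xs i < pv xs (i + 1)))"

definition inv_stat :: "nat list \<Rightarrow> nat" where
  "inv_stat xs = card {(i, j). 1 \<le> i \<and> i < j \<and> j \<le> length xs \<and> pv xs i > pv xs j}"

definition adi :: "nat list \<Rightarrow> nat" where
  "adi xs = card {(i, j). 1 \<le> i \<and> i < j \<and> j \<le> length xs \<and> pv xs i > pv xs j \<and>
      (pv xs j < pv xs (j + 1) \<or> (\<exists>l. i < l \<and> l < j \<and> pv xs l < pv xs j))}"

definition pat_3_12 :: "nat list \<Rightarrow> nat" where
  "pat_3_12 xs = card {(i, j). 1 \<le> i \<and> i < j \<and> j < length xs \<and>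
      pv xs j < pv xs (j + 1) \<and> pv xs (j + 1) < pv xs i}"

definition pat_31_2 :: "nat list \<Rightarrow> nat" where
  "pat_31_2 xs = card {(i, j). 1 \<le> i \<and> i + 1 < j \<and> j \<le> length xs \<and>
      pv xs (i + 1) < pv xs j \<and> pv xs j < pv xs i}"

definition des :: "nat list \<Rightarrow> nat" where
  "des xs = card {i. 1 \<le> i \<and> i < length xs \<and> pv xs i > pv xs (i + 1)}"

definition dd :: "nat list \<Rightarrow> nat" where
  "dd xs = card {i. 1 \<le> i \<and> i \<le> length xs \<and>
      pv xs (i - 1) > pv xs i \<and> pv xs i > pv xs (i + 1)}"

definition avoids_213 :: "nat list \<Rightarrow> bool" where
  "avoids_213 xs \<longleftrightarrow> \<not> (\<exists>i j k. 1 \<le> i \<and> i < j \<and> j < k \<and> k \<le> length xs \<and>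
      pv xs j < pv xs i \<and> pv xs i < pv xs k)"

definition S_tilde_213 :: "nat \<Rightarrow> nat \<Rightarrow> nat list set" where
  "S_tilde_213 m k = {xs. is_perm m xs \<and> avoids_213 xs \<and> dd xs = 0 \<and> des xs = k}"

end

theory Submission
  imports Defs
begin

lemma pv_pos: "is_perm m xs \<Longrightarrow> 1 \<le> i \<Longrightarrow> i \<le> m \<Longrightarrow> pv xs i \<ge> 1"
proof -
  assume a: "is_perm m xs" "1 \<le> i" "i \<le> m"
  then have "xs ! (i - 1) \<in> set xs" unfolding is_perm_def by auto
  then show ?thesis using a unfolding is_perm_def pv_def by auto
qed

lemma pv_inj: "is_perm m xs \<Longrightarrow> 1 \<le> i \<Longrightarrow> i \<le> m \<Longrightarrow> 1 \<le> j \<Longrightarrow> j \<le> m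
  \<Longrightarrow> pv xs i = pv xs j \<Longrightarrow> i = j"
  unfolding is_perm_def pv_def
  by (metis One_nat_def Suc_le_eq Suc_pred nth_eq_iff_index_eq le_less_trans less_Suc_eq_le zero_less_one)

lemma du_odd: "down_up xs \<Longrightarrow> 1 \<le> i \<Longrightarrow> i < length xs \<Longrightarrow> odd i \<Longrightarrow> pv xs (i+1) < pv xs i"
  unfolding down_up_def by auto

lemma du_even: "down_up xs \<Longrightarrow> 1 \<le> i \<Longrightarrow> i < length xs \<Longrightarrow> even i \<Longrightarrow> pv xs i < pv xs (i+1)"
  unfolding down_up_def by auto

lemma du_asc_even: "down_up xs \<Longrightarrow> 1 \<le> i \<Longrightarrow> i < length xs \<Longrightarrow> pv xs i < pv xs (i+1) \<Longrightarrow> even i"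
  using du_odd by fastforce

lemma du_desc_odd: "down_up xs \<Longrightarrow> 1 \<le> i \<Longrightarrow> i < length xs \<Longrightarrow> pv xs (i+1) < pv xs i \<Longrightarrow> odd i"
  using du_even by fastforce

lemma av: "avoids_213 xs \<Longrightarrow> 1 \<le> i \<Longrightarrow> i < j \<Longrightarrow> j < k \<Longrightarrow> k \<le> length xs
  \<Longrightarrow> pv xs j < pv xs i \<Longrightarrow> pv xs i < pv xs k \<Longrightarrow> False"
  unfolding avoids_213_def by blast

lemma pv_rev: "pv (rev xs) i = (if 1 \<le> i \<and> i \<le> length xs then pv xs (length xs + 1 - i) else 0)"
  unfolding pv_def by (auto simp: rev_nth)

lemma fin_pairs: "finite {(i, j). P i j \<and> i \<le> (m::nat) \<and> j \<le> m}"
  by (rule finite_subset[of _ "{..m} \<times> {..m}"]) auto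

lemma card_pairs: "card {(i, j). 1 \<le> i \<and> i < j \<and> j \<le> (m::nat)} = m * (m - 1) div 2"
proof (induction m)
  case 0
  have e: "{(i, j). 1 \<le> i \<and> i < j \<and> j \<le> (0::nat)} = {}" by auto
  show ?case by (simp only: e card.empty)
next
  case (Suc m)
  have e: "{(i, j). 1 \<le> i \<and> i < j \<and> j \<le> Suc m} =
     {(i, j). 1 \<le> i \<and> i < j \<and> j \<le> m} \<union> (\<lambda>i. (i, Suc m)) ` {1..m}"
    by auto
  have f1: "finite {(i, j). 1 \<le> i \<and> i < j \<and> j \<le> m}"
    by (rule finite_subset[OF _ fin_pairs[of "\<lambda>i j. True" m]]) auto
  have d: "{(i, j). 1 \<le> i \<and> i < j \<and> j \<le> m} \<inter> (\<lambda>i. (i, Suc m)) ` {1..m} = {}" by auto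
  have c2: "card ((\<lambda>i. (i, Suc m)) ` {1..m}) = m"
    by (subst card_image) (auto simp: inj_on_def)
  have "card {(i, j). 1 \<le> i \<and> i < j \<and> j \<le> Suc m} = m * (m - 1) div 2 + m"
    unfolding e card_Un_disjoint[OF f1 finite_imageI[OF finite_atLeastAtMost] d] c2 Suc.IH by simp
  also have "\<dots> = Suc m * (Suc m - 1) div 2"
    by (cases m) auto
  finally show ?case .
qed

lemma alt_set: "D \<subseteq> {1..<2*k} \<Longrightarrow> (\<forall>i. i \<in> D \<longrightarrow> Suc i \<notin> D) \<Longrightarrow>
   card D \<le> k \<and> (card D = k \<longrightarrow> D = {i. odd i \<and> i < 2*k})"
proof (induction k arbitrary: D)
  case 0
  then show ?case by auto
next
  case (Suc k)
  define D' where "D' = D \<inter> {1..<2*k}"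
  have IH: "card D' \<le> k \<and> (card D' = k \<longrightarrow> D' = {i. odd i \<and> i < 2*k})"
    using Suc.IH[of D'] Suc.prems unfolding D'_def by auto
  have sp: "D = D' \<union> (D \<inter> {2*k, 2*k+1})" using Suc.prems(1) unfolding D'_def by auto
  have c1: "card (D \<inter> {2*k, 2*k+1}) \<le> 1"
  proof (cases "2*k \<in> D")
    case True
    then have "2*k+1 \<notin> D" using Suc.prems(2) by auto
    then have "D \<inter> {2*k, 2*k+1} \<subseteq> {2*k}" by auto
    from card_mono[OF _ this] show ?thesis by simp
  next
    case False
    then have "D \<inter> {2*k, 2*k+1} \<subseteq> {2*k+1}" by auto
    from card_mono[OF _ this] show ?thesis by simp
  qed
  have cD: "card D \<le> card D' + card (D \<inter> {2*k, 2*k+1})"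
    by (subst sp) (rule card_Un_le)
  show ?case
  proof
    show "card D \<le> Suc k" using cD c1 IH by linarith
    show "card D = Suc k \<longrightarrow> D = {i. odd i \<and> i < 2 * Suc k}"
    proof
      assume h: "card D = Suc k"
      then have ck: "card D' = k" using cD c1 IH by linarith
      then have D'e: "D' = {i. odd i \<and> i < 2*k}" using IH by auto
      have "card (D \<inter> {2*k, 2*k+1}) = 1" using cD c1 h ck by linarith
      then have ne: "D \<inter> {2*k, 2*k+1} \<noteq> {}" by (metis card.empty zero_neq_one)
      have n2k: "2*k \<notin> D"
      proof
        assume "2*k \<in> D"
        then have k1: "k \<ge> 1" using Suc.prems(1) by auto
        then have "odd (2*k - 1)" by presburger
        moreover have "2*k - 1 < 2*k" using k1 by simp
        ultimately have "2*k - 1 \<in> D'" using D'e by blast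
        then have "Suc (2*k-1) \<notin> D" using Suc.prems(2) D'_def by auto
        moreover have "Suc (2*k-1) = 2*k" using k1 by simp
        ultimately show False using \<open>2*k \<in> D\<close> by simp
      qed
      then have in1: "2*k+1 \<in> D" using ne by auto
      show "D = {i. odd i \<and> i < 2 * Suc k}"
      proof (intro set_eqI iffI)
        fix x assume x: "x \<in> D"
        show "x \<in> {i. odd i \<and> i < 2 * Suc k}"
        proof (cases "x \<in> D'")
          case True then show ?thesis using D'e by auto
        next
          case False
          then have "x = 2*k+1" using x sp n2k by auto
          then show ?thesis by simp
        qed
      next
        fix x assume x: "x \<in> {i. odd i \<and> i < 2 * Suc k}"
        then have ox: "odd x" "x < 2*k+2" by auto
        show "x \<in> D"
        proof (cases "x < 2*k")
          case True then have "x \<in> D'" using D'e ox by auto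
          then show ?thesis unfolding D'_def by auto
        next
          case False
          then have "x = 2*k \<or> x = 2*k+1" using ox by auto
          then have "x = 2*k+1" using ox(1) by auto
          then show ?thesis using in1 by simp
        qed
      qed
    qed
  qed
qed

lemma S_down_up:
  assumes "xs \<in> S_tilde_213 (2 * n + 1) n"
  shows "down_up xs"
proof -
  let ?m = "2*n+1"
  have perm: "is_perm ?m xs" and dd0: "dd xs = 0" and dsn: "des xs = n"
    using assms unfolding S_tilde_213_def by auto
  have len: "length xs = ?m" using perm unfolding is_perm_def by auto
  let ?DD = "{i. 1 \<le> i \<and> i \<le> length xs \<and> pv xs (i - 1) > pv xs i \<and> pv xs i > pv xs (i + 1)}"
  have "finite ?DD" by (rule finite_subset[of _ "{..length xs}"]) auto
  then have DDe: "?DD = {}" using dd0 unfolding dd_def by auto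
  define D where "D = {i. 1 \<le> i \<and> i < length xs \<and> pv xs i > pv xs (i + 1)}"
  have cD: "card D = n" using dsn unfolding des_def D_def by auto
  have nc: "\<forall>i. i \<in> D \<longrightarrow> Suc i \<notin> D"
  proof (intro allI impI)
    fix i assume "i \<in> D"
    show "Suc i \<notin> D"
    proof
      assume "Suc i \<in> D"
      then have "Suc i \<in> ?DD" using \<open>i \<in> D\<close> unfolding D_def by auto
      then show False using DDe by auto
    qed
  qed
  have sub: "D \<subseteq> {1..<2*n}"
  proof
    fix i assume "i \<in> D"
    have "i \<noteq> 2*n"
    proof
      assume "i = 2*n"
      have "pv xs ?m \<ge> 1" using pv_pos[OF perm, of ?m] by auto
      moreover have "pv xs (?m+1) = 0" unfolding pv_def using len by auto
      ultimately have "?m \<in> ?DD" using \<open>i \<in> D\<close> \<open>i = 2*n\<close> len unfolding D_def by auto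
      then show False using DDe by auto
    qed
    then show "i \<in> {1..<2*n}" using \<open>i \<in> D\<close> len unfolding D_def by auto
  qed
  have De: "D = {i. odd i \<and> i < 2*n}" using alt_set[OF sub nc] cD by auto
  show ?thesis unfolding down_up_def
  proof (intro allI impI conjI)
    fix i assume i: "1 \<le> i \<and> i < length xs"
    { assume "odd i"
      then have "i \<noteq> 2*n" by auto
      then have "i < 2*n" using i len by auto
      then have "i \<in> D" using De i len \<open>odd i\<close> by auto
      then show "pv xs (i+1) < pv xs i" unfolding D_def by auto }
    { assume "even i"
      then have "i \<notin> D" using De by auto
      then have "\<not> pv xs i > pv xs (i+1)" using i unfolding D_def by auto
      moreover have "pv xs i \<noteq> pv xs (i+1)"
        using pv_inj[OF perm, of i "i+1"] i len by auto
      ultimately show "pv xs i < pv xs (i+1)" by auto }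
  qed
qed

lemma part_a:
  assumes perm: "is_perm (2 * n + 1) xs" and du: "down_up xs"
  shows "adi xs = inv_stat xs"
proof -
  have len: "length xs = 2*n+1" using perm unfolding is_perm_def by auto
  have "{(i, j). 1 \<le> i \<and> i < j \<and> j \<le> length xs \<and> pv xs i > pv xs j \<and>
      (pv xs j < pv xs (j + 1) \<or> (\<exists>l. i < l \<and> l < j \<and> pv xs l < pv xs j))}
     = {(i, j). 1 \<le> i \<and> i < j \<and> j \<le> length xs \<and> pv xs i > pv xs j}"
  proof (intro set_eqI iffI)
    fix x assume x: "x \<in> {(i, j). 1 \<le> i \<and> i < j \<and> j \<le> length xs \<and> pv xs i > pv xs j}"
    obtain i j where x': "x = (i,j)" "1 \<le> i" "i < j" "j \<le> length xs" "pv xs i > pv xs j"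
      using x by auto
    show "x \<in> {(i, j). 1 \<le> i \<and> i < j \<and> j \<le> length xs \<and> pv xs i > pv xs j \<and>
      (pv xs j < pv xs (j + 1) \<or> (\<exists>l. i < l \<and> l < j \<and> pv xs l < pv xs j))}"
    proof (cases "even j")
      case True
      then have "j < length xs" using x' len by (metis dvd_triv_left even_add le_neq_implies_less odd_one)
      then have "pv xs j < pv xs (j+1)" using du_even[OF du, of j] True x' by auto
      then show ?thesis using x' by auto
    next
      case False
      have "i \<noteq> j - 1"
      proof
        assume "i = j - 1"
        then have "pv xs i < pv xs (i+1)" using du_even[OF du, of i] x' False
          by (metis Suc_eq_plus1 Suc_pred' even_Suc le_less_trans less_one not_le_imp_less zero_less_one le_less_Suc_eq less_imp_le_nat order_le_less_trans)
        then show False using x' \<open>i = j - 1\<close> by simp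
      qed
      then have l: "i < j - 1" "j - 1 < j" using x' by auto
      have "pv xs (j-1) < pv xs (j - 1 + 1)" using du_even[OF du, of "j-1"] l x' False by auto
      then have "pv xs (j-1) < pv xs j" using l by auto
      then show ?thesis using x' l by blast
    qed
  qed auto
  then show ?thesis unfolding adi_def inv_stat_def by simp
qed

lemma part_b:
  assumes perm: "is_perm (2 * n + 1) xs" and du: "down_up xs" and avd: "avoids_213 xs"
  shows "adi xs + adi (rev xs) = 2 * n ^ 2 + n \<and>
            adi xs = 2 * pat_3_12 xs \<and>
            adi (rev xs) = pat_31_2 xs"
proof -
  define m where "m = 2*n+1"
  have len: "length xs = m" using perm unfolding is_perm_def m_def by auto
  have perm': "is_perm m xs" using perm m_def by simp
  define I where "I = {(i, j). 1 \<le> i \<and> i < j \<and> j \<le> length xs \<and> pv xs i > pv xs j}"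
  define P where "P = {(i, j). 1 \<le> i \<and> i < j \<and> j < length xs \<and>
      pv xs j < pv xs (j + 1) \<and> pv xs (j + 1) < pv xs i}"
  define Q where "Q = {(i, j). 1 \<le> i \<and> i + 1 < j \<and> j \<le> length xs \<and>
      pv xs (i + 1) < pv xs j \<and> pv xs j < pv xs i}"
  define E where "E = {(a, b). 1 \<le> a \<and> a < b \<and> b \<le> length xs \<and> pv xs a < pv xs b}"
  define T where "T = {(i, j). 1 \<le> i \<and> i < j \<and> j \<le> length xs}"
  define R where "R = {(i, j). 1 \<le> i \<and> i < j \<and> j \<le> length (rev xs) \<and> pv (rev xs) i > pv (rev xs) j \<and>
      (pv (rev xs) j < pv (rev xs) (j + 1) \<or> (\<exists>l. i < l \<and> l < j \<and> pv (rev xs) l < pv (rev xs) j))}"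
  have adiI: "adi xs = card I" using part_a[OF perm du] unfolding inv_stat_def I_def by simp
  have adiR: "adi (rev xs) = card R" unfolding adi_def R_def by simp
  have p312: "pat_3_12 xs = card P" unfolding pat_3_12_def P_def by simp
  have p312b: "pat_31_2 xs = card Q" unfolding pat_31_2_def Q_def by simp
  have finT: "finite T" unfolding T_def
    by (rule finite_subset[OF _ fin_pairs[of "\<lambda>i j. True" "length xs"]]) auto
  have finI: "finite I" by (rule finite_subset[OF _ finT]) (auto simp: I_def T_def)
  have finE: "finite E" by (rule finite_subset[OF _ finT]) (auto simp: E_def T_def)
  have finP: "finite P" by (rule finite_subset[OF _ finT]) (auto simp: P_def T_def)
  have finQ: "finite Q" by (rule finite_subset[OF _ finT]) (auto simp: Q_def T_def)

  have BP: "{x \<in> I. even (snd x)} = P"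
  proof (intro set_eqI iffI)
    fix x assume "x \<in> {x \<in> I. even (snd x)}"
    then obtain i k where x: "x = (i,k)" "1 \<le> i" "i < k" "k \<le> m" "pv xs k < pv xs i" "even k"
      unfolding I_def len by auto
    have "k \<noteq> m" using x m_def by auto
    then have km: "k < m" using x by auto
    have a1: "pv xs k < pv xs (k+1)" using du_even[OF du, of k] x km len by auto
    have "pv xs (k+1) \<noteq> pv xs i" using pv_inj[OF perm', of "k+1" i] x km by auto
    moreover have "\<not> pv xs i < pv xs (k+1)"
      using av[OF avd, of i k "k+1"] x km len a1 by auto
    ultimately have "pv xs (k+1) < pv xs i" by auto
    then show "x \<in> P" unfolding P_def using x km a1 len by auto
  next
    fix x assume "x \<in> P"
    then obtain i j where x: "x = (i,j)" "1 \<le> i" "i < j" "j < length xs"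
      "pv xs j < pv xs (j + 1)" "pv xs (j + 1) < pv xs i"
      unfolding P_def by auto
    have "even j" using du_asc_even[OF du, of j] x by auto
    then show "x \<in> {x \<in> I. even (snd x)}" unfolding I_def using x by auto
  qed

  have AP: "{x \<in> I. odd (snd x)} = (\<lambda>(i,j). (i, j+1)) ` P"
  proof (intro set_eqI iffI)
    fix x assume "x \<in> {x \<in> I. odd (snd x)}"
    then obtain i k where x: "x = (i,k)" "1 \<le> i" "i < k" "k \<le> m" "pv xs k < pv xs i" "odd k"
      unfolding I_def len by auto
    have ne: "i \<noteq> k - 1"
    proof
      assume h: "i = k - 1"
      then have ei: "even i" using x(3) x(6) by presburger
      have "i < length xs" using x(3) x(4) len by simp
      then have "pv xs i < pv xs (i+1)" using du_even[OF du, of i] x(2) ei by blast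
      moreover have "i + 1 = k" using h x(3) by simp
      ultimately show False using x(5) by simp
    qed
    have "pv xs (k - 1) < pv xs (k - 1 + 1)" using du_even[OF du, of "k-1"] x len ne by auto
    then have "pv xs (k - 1) < pv xs k" using x by auto
    then have "(i, k-1) \<in> P" unfolding P_def using x ne len by auto
    moreover have "x = (\<lambda>(i,j). (i, j+1)) (i, k-1)" using x by auto
    ultimately show "x \<in> (\<lambda>(i,j). (i, j+1)) ` P" by blast
  next
    fix x assume "x \<in> (\<lambda>(i,j). (i, j+1)) ` P"
    then obtain i j where x: "x = (i,j+1)" "1 \<le> i" "i < j" "j < length xs"
      "pv xs j < pv xs (j + 1)" "pv xs (j + 1) < pv xs i"
      unfolding P_def by auto
    have "even j" using du_asc_even[OF du, of j] x by auto
    then show "x \<in> {x \<in> I. odd (snd x)}" unfolding I_def using x by auto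
  qed
  have cAP: "card ((\<lambda>(i,j). (i, j+1)) ` P) = card P"
    by (rule card_image) (auto simp: inj_on_def)
  have cI: "card I = 2 * card P"
  proof -
    have "I = {x \<in> I. even (snd x)} \<union> {x \<in> I. odd (snd x)}" by auto
    then have "card I = card {x \<in> I. even (snd x)} + card {x \<in> I. odd (snd x)}"
      using finI by (metis (no_types, lifting) card_Un_disjoint disjoint_iff finite_Un mem_Collect_eq)
    then show ?thesis using BP AP cAP by simp
  qed

  have Eeven: "\<And>a b. (a,b) \<in> E \<Longrightarrow> even a"
  proof (rule ccontr)
    fix a b assume e: "(a,b) \<in> E" and o: "\<not> even a"
    have ab: "1 \<le> a" "a < b" "b \<le> m" "pv xs a < pv xs b" using e unfolding E_def len by auto
    have d: "pv xs (a+1) < pv xs a" using du_odd[OF du, of a] ab o len by auto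
    show False
    proof (cases "b = a+1")
      case True then show False using d ab by auto
    next
      case False
      then show False using av[OF avd, of a "a+1" b] ab d len by auto
    qed
  qed

  have cT: "card T = card I + card E"
  proof -
    have "T = I \<union> E"
    proof (intro set_eqI iffI)
      fix x assume "x \<in> T"
      then obtain i j where x: "x = (i,j)" "1 \<le> i" "i < j" "j \<le> length xs" unfolding T_def by auto
      have "pv xs i \<noteq> pv xs j" using pv_inj[OF perm', of i j] x len by auto
      then show "x \<in> I \<union> E" unfolding I_def E_def using x by (auto simp: linorder_neq_iff)
    qed (auto simp: T_def I_def E_def)
    moreover have "I \<inter> E = {}" unfolding I_def E_def by auto
    ultimately show ?thesis using finI finE card_Un_disjoint by metis
  qed
  have cT2: "card T = 2 * n ^ 2 + n"
  proof -
    have "card T = m * (m - 1) div 2" unfolding T_def len by (rule card_pairs)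
    also have "\<dots> = 2 * n ^ 2 + n"
    proof -
      have "m * (m - 1) = 2 * (2 * n ^ 2 + n)" unfolding m_def power2_eq_square by simp
      then show ?thesis by simp
    qed
    finally show ?thesis .
  qed

  define f where "f = (\<lambda>(a::nat,b::nat). (m+1-b, m+1-a))"
  have RE: "R = f ` E"
  proof (intro set_eqI iffI)
    fix x assume "x \<in> R"
    then obtain i j where x: "x = (i,j)" "1 \<le> i" "i < j" "j \<le> m" "pv (rev xs) i > pv (rev xs) j"
      unfolding R_def length_rev len by auto
    have "pv xs (m+1-i) > pv xs (m+1-j)" using x by (simp add: pv_rev len)
    then have "(m+1-j, m+1-i) \<in> E" unfolding E_def using x len by auto
    moreover have "x = f (m+1-j, m+1-i)" unfolding f_def using x by auto
    ultimately show "x \<in> f ` E" by blast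
  next
    fix x assume "x \<in> f ` E"
    then obtain a b where x: "x = f (a,b)" "(a,b) \<in> E" by auto
    have ab: "1 \<le> a" "a < b" "b \<le> m" "pv xs a < pv xs b" using x unfolding E_def len by auto
    have ev: "even a" using Eeven x by auto
    then have a2: "a \<ge> 2" using ab(1) by presburger
    have d: "pv xs (a - 1 + 1) < pv xs (a - 1)" using du_odd[OF du, of "a-1"] ab a2 ev len by auto
    have c1: "1 \<le> m+1-b \<and> m+1-b \<le> length xs" "length xs + 1 - (m+1-b) = b" using ab len by arith+
    have c2: "1 \<le> m+1-a \<and> m+1-a \<le> length xs" "length xs + 1 - (m+1-a) = a" using ab len by arith+
    have c3: "1 \<le> m+1-a+1 \<and> m+1-a+1 \<le> length xs" "length xs + 1 - (m+1-a+1) = a - 1" using ab a2 len by arith+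
    have r1: "pv (rev xs) (m+1-b) = pv xs b" unfolding pv_rev using c1 by presburger
    have r2: "pv (rev xs) (m+1-a) = pv xs a" unfolding pv_rev using c2 by presburger
    have r3: "pv (rev xs) (m+1-a+1) = pv xs (a-1)" unfolding pv_rev using c3 by presburger
    have "pv xs a < pv xs (a-1)" using d a2 by auto
    have xe: "x = (m+1-b, m+1-a)" using x(1) unfolding f_def by simp
    have ar: "1 \<le> m+1-b \<and> m+1-b < m+1-a \<and> m+1-a \<le> length (rev xs)" using ab len by auto
    show "x \<in> R" unfolding R_def xe mem_Collect_eq case_prod_conv
      using ar r1 r2 r3 \<open>pv xs a < pv xs (a-1)\<close> ab by auto
  qed
  have cRE: "card R = card E"
    unfolding RE by (rule card_image) (auto simp: inj_on_def f_def E_def len)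

  have EQ: "E = (\<lambda>(i,j). (i+1, j)) ` Q"
  proof (intro set_eqI iffI)
    fix x assume xE: "x \<in> E"
    then obtain a b where x: "x = (a,b)" "1 \<le> a" "a < b" "b \<le> m" "pv xs a < pv xs b"
      unfolding E_def len by auto
    have ev: "even a" using Eeven xE x(1) by auto
    then have a2: "a \<ge> 2" using x(2) by presburger
    have d: "pv xs (a - 1 + 1) < pv xs (a - 1)" using du_odd[OF du, of "a-1"] x a2 ev len by auto
    then have d': "pv xs a < pv xs (a - 1)" using a2 by auto
    have "pv xs b \<noteq> pv xs (a-1)"
    proof
      assume h: "pv xs b = pv xs (a-1)"
      have "b = a - 1" by (rule pv_inj[OF perm' _ _ _ _ h]) (use x a2 in auto)
      then show False using x(3) by simp
    qed
    moreover have "\<not> pv xs (a-1) < pv xs b"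
    proof
      assume h: "pv xs (a-1) < pv xs b"
      have q: "1 \<le> a - 1" "a - 1 < a" "b \<le> length xs" using a2 x len by auto
      show False by (rule av[OF avd q(1) q(2) x(3) q(3) d' h])
    qed
    ultimately have "pv xs b < pv xs (a-1)" by auto
    then have "(a-1, b) \<in> Q" unfolding Q_def using x a2 len by auto
    moreover have "x = (\<lambda>(i,j). (i+1, j)) (a-1, b)" using x a2 by auto
    ultimately show "x \<in> (\<lambda>(i,j). (i+1, j)) ` Q" by blast
  qed (auto simp: Q_def E_def)
  have cEQ: "card E = card Q"
    unfolding EQ by (rule card_image) (auto simp: inj_on_def)

  have g1: "adi xs + adi (rev xs) = 2 * n ^ 2 + n" using adiI adiR cRE cT cT2 by linarith
  have g2: "adi xs = 2 * pat_3_12 xs" using adiI cI p312 by linarith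
  have g3: "adi (rev xs) = pat_31_2 xs" using adiR cRE cEQ p312b by linarith
  show ?thesis using g1 g2 g3 by blast
qed

theorem lemma3p9:
  shows "(\<forall>(n::nat) xs. is_perm (2 * n + 1) xs \<and> down_up xs \<longrightarrow> adi xs = inv_stat xs) \<and>
         (\<forall>(n::nat) xs. xs \<in> S_tilde_213 (2 * n + 1) n \<longrightarrow>
            adi xs + adi (rev xs) = 2 * n ^ 2 + n \<and>
            adi xs = 2 * pat_3_12 xs \<and>
            adi (rev xs) = pat_31_2 xs)"
proof (rule conjI)
  show "\<forall>(n::nat) xs. is_perm (2 * n + 1) xs \<and> down_up xs \<longrightarrow> adi xs = inv_stat xs"
    using part_a by blast
next
  show "\<forall>(n::nat) xs. xs \<in> S_tilde_213 (2 * n + 1) n \<longrightarrow>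
            adi xs + adi (rev xs) = 2 * n ^ 2 + n \<and>
            adi xs = 2 * pat_3_12 xs \<and>
            adi (rev xs) = pat_31_2 xs"
  proof (intro allI impI)
    fix n xs assume h: "xs \<in> S_tilde_213 (2 * n + 1) n"
    have "is_perm (2 * n + 1) xs" "avoids_213 xs" using h unfolding S_tilde_213_def by auto
    then show "adi xs + adi (rev xs) = 2 * n ^ 2 + n \<and>
            adi xs = 2 * pat_3_12 xs \<and> adi (rev xs) = pat_31_2 xs"
      using part_b S_down_up[OF h] by blast
  qed
qed

end
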